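(* Let $(\mathcal{I},G,S)$ be an optimization problem class and let $(\mathcal{Q},H)$ be an oracle for $\mathcal{I}$. Suppose $\epsilon\ge 0$ and $\mathcal{A}$ is an $\epsilon$-approximation algorithm for $(\mathcal{I},G,S)$ using $(\mathcal{Q},H)$. For each $I\in\mathcal{I}$ let $Q(I)\subseteq\mathcal{Q}$ be the set of queries posed by $\mathcal{A}$ when processing instance $I$. Then $$\bigcap_{I'\in V(I,Q(I))} S(I',\epsilon)\neq\emptyset\qquad\text{for all } I\in\mathcal{I}.$$
   Context: An optimization problem class is a triple $(\mathcal{I},G,S)$: a set $\mathcal{I}$ of instances, a set $G$ of possible solutions, and a solution operator $S:\mathcal{I}\times\mathbb{R}_+\to 2^G\cup\{INFEAS\}\cup\{UNBND\}$ such that $S(I,0)\neq\emptyset$ for all $I$; $S(I,\epsilon_1)\subseteq S(I,\epsilon_2)$ whenever $0\le\epsilon_1<\epsilon_2$; if $INFEAS\in S(I,\epsilon)$ (resp. $UNBND\in S(I,\epsilon)$) then $S(I,\epsilon)=\{INFEAS\}$ (resp. $\{UNBND\}$); and if $UNBND\in S(I,0)$ then $S(I,\epsilon)=\{UNBND\}$ for all $\epsilon\ge0$. $S(I,\epsilon)$ is interpreted as the set of $\epsilon$-approximate solutions of $I$. An oracle for $\mathcal{I}$ is a pair $(\mathcal{Q},H)$ where each query $q\in\mathcal{Q}$ is a map $q:\mathcal{I}\to H$; $q(I)$ is the answer to $q$ on $I$. An $\epsilon$-approximation algorithm for $(\mathcal{I},G,S)$ using $(\mathcal{Q},H)$ is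 an oracle Turing machine (a deterministic Turing machine that may adaptively pose queries $q\in\mathcal{Q}$ and use the answers) that starts with the empty string as input and, for every $I\in\mathcal{I}$, halts with an element of $S(I,\epsilon)$ when every query $q$ it poses is answered with $q(I)$. For a subset $Q\subseteq\mathcal{Q}$ and $I\in\mathcal{I}$, $V(I,Q)=\{I'\in\mathcal{I}: q(I')=q(I)\ \forall q\in Q\}$. *)

theory Defs
  imports Main "HOL.Real"
begin

datatype 'g result = Sol 'g | INFEAS | UNBND

definition opt_problem_class ::
  "'i set \<Rightarrow> 'g set \<Rightarrow> ('i \<Rightarrow> real \<Rightarrow> 'g result set) \<Rightarrow> bool" where
  "opt_problem_class II G S \<longleftrightarrow>
     (\<forall>I\<in>II. \<forall>e\<ge>0. S I e \<subseteq> Sol ` G \<or> S I e = {INFEAS} \<or> S I e = {UNBND}) \<and>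
     (\<forall>I\<in>II. S I 0 \<noteq> {}) \<and>
     (\<forall>I\<in>II. \<forall>e1 e2. 0 \<le> e1 \<and> e1 < e2 \<longrightarrow> S I e1 \<subseteq> S I e2) \<and>
     (\<forall>I\<in>II. \<forall>e\<ge>0. INFEAS \<in> S I e \<longrightarrow> S I e = {INFEAS}) \<and>
     (\<forall>I\<in>II. \<forall>e\<ge>0. UNBND \<in> S I e \<longrightarrow> S I e = {UNBND}) \<and>
     (\<forall>I\<in>II. UNBND \<in> S I 0 \<longrightarrow> (\<forall>e\<ge>0. S I e = {UNBND}))"

text \<open>A deterministic adaptive oracle algorithm started on the empty input is modelled by
  its next action as a function of the sequence of oracle answers received so far.\<close>
datatype ('q, 'o) action = Ask 'q | Output 'o

type_synonym ('i, 'h, 'g) oracle_alg = "'h list \<Rightarrow> ('i \<Rightarrow> 'h, 'g result) action"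

fun hist :: "('i, 'h, 'g) oracle_alg \<Rightarrow> 'i \<Rightarrow> nat \<Rightarrow> 'h list" where
  "hist A I 0 = []"
| "hist A I (Suc n) =
     (case A (hist A I n) of Ask q \<Rightarrow> hist A I n @ [q I] | Output _ \<Rightarrow> hist A I n)"

definition queries_posed :: "('i, 'h, 'g) oracle_alg \<Rightarrow> 'i \<Rightarrow> ('i \<Rightarrow> 'h) set" where
  "queries_posed A I = {q. \<exists>n. (\<forall>m<n. \<exists>q'. A (hist A I m) = Ask q') \<and> A (hist A I n) = Ask q}"

definition approx_alg ::
  "'i set \<Rightarrow> ('i \<Rightarrow> real \<Rightarrow> 'g result set) \<Rightarrow> ('i \<Rightarrow> 'h) set \<Rightarrow> real
     \<Rightarrow> ('i, 'h, 'g) oracle_alg \<Rightarrow> bool" where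
  "approx_alg II S QQ e A \<longleftrightarrow>
     (\<forall>I\<in>II. queries_posed A I \<subseteq> QQ \<and>
        (\<exists>n x. A (hist A I n) = Output x \<and> x \<in> S I e))"

definition Vset :: "'i set \<Rightarrow> 'i \<Rightarrow> ('i \<Rightarrow> 'h) set \<Rightarrow> 'i set" where
  "Vset II I Q = {I'\<in>II. \<forall>q\<in>Q. q I' = q I}"

end

theory Submission
  imports Defs
begin

lemma hist_stay:
  assumes "A (hist A I n) = Output x"
  shows "hist A I (n + k) = hist A I n"
  using assms by (induction k) auto

lemma hist_stay2:
  assumes "A (hist A I n) = Output x" "n \<le> m"
  shows "hist A I m = hist A I n"
  using hist_stay[of A I n x "m - n"] assms by simp

lemma hist_agree:
  assumes "\<forall>m<n. \<exists>q. A (hist A I m) = Ask q \<and> q I' = q I"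
  shows "k \<le> n \<Longrightarrow> hist A I' k = hist A I k"
proof (induction k)
  case 0 then show ?case by simp
next
  case (Suc k)
  then have "k < n" by simp
  with assms obtain q where q: "A (hist A I k) = Ask q" "q I' = q I" by blast
  with Suc show ?case by simp
qed

theorem mainTheorem1:
  fixes II :: "'i set" and G :: "'g set" and S :: "'i \<Rightarrow> real \<Rightarrow> 'g result set"
    and QQ :: "('i \<Rightarrow> 'h) set" and e :: real and A :: "('i, 'h, 'g) oracle_alg"
  assumes "opt_problem_class II G S"
    and "e \<ge> 0"
    and "approx_alg II S QQ e A"
  shows "\<forall>I\<in>II. (\<Inter>I'\<in>Vset II I (queries_posed A I). S I' e) \<noteq> {}"
proof
  fix I assume I: "I \<in> II"
  then obtain n x where nx: "A (hist A I n) = Output x"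
    using assms(3) unfolding approx_alg_def by blast
  define P where "P = (\<lambda>n. \<exists>x. A (hist A I n) = Output x)"
  have Pn: "P n" using nx P_def by blast
  define n0 where "n0 = (LEAST n. P n)"
  have P0: "P n0" using Pn n0_def by (metis LeastI)
  then obtain x0 where x0: "A (hist A I n0) = Output x0" using P_def by blast
  have before: "\<forall>m<n0. \<exists>q. A (hist A I m) = Ask q"
  proof (intro allI impI)
    fix m assume "m < n0"
    then have "\<not> P m" using n0_def not_less_Least by blast
    then show "\<exists>q. A (hist A I m) = Ask q" unfolding P_def by (cases "A (hist A I m)") auto
  qed
  have "x0 \<in> (\<Inter>I'\<in>Vset II I (queries_posed A I). S I' e)"
  proof
    fix I' assume V: "I' \<in> Vset II I (queries_posed A I)"
    have I': "I' \<in> II" using V unfolding Vset_def by blast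
    have agr: "\<forall>m<n0. \<exists>q. A (hist A I m) = Ask q \<and> q I' = q I"
    proof (intro allI impI)
      fix m assume m: "m < n0"
      then obtain q where q: "A (hist A I m) = Ask q" using before by blast
      have bm: "\<forall>m'<m. \<exists>q'. A (hist A I m') = Ask q'" using before m by simp
      have "q \<in> queries_posed A I" unfolding queries_posed_def
        using bm q by blast
      then have "q I' = q I" using V unfolding Vset_def by blast
      with q show "\<exists>q. A (hist A I m) = Ask q \<and> q I' = q I" by blast
    qed
    have hI': "\<And>k. k \<le> n0 \<Longrightarrow> hist A I' k = hist A I k"
      using hist_agree[OF agr] by blast
    have x0': "A (hist A I' n0) = Output x0" using hI'[of n0] x0 by simp
    obtain n' x' where nx': "A (hist A I' n') = Output x'" "x' \<in> S I' e"
      using I' assms(3) unfolding approx_alg_def by blast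
    have "n0 \<le> n'"
    proof (rule ccontr)
      assume "\<not> n0 \<le> n'"
      then have "n' < n0" by simp
      then obtain q where "A (hist A I n') = Ask q" using before by blast
      moreover have "hist A I' n' = hist A I n'" using hI' \<open>n' < n0\<close> by simp
      ultimately show False using nx' by simp
    qed
    then have "hist A I' n' = hist A I' n0" using hist_stay2[of A I' n0 x0 n'] x0' by blast
    then have "x' = x0" using nx'(1) x0' by simp
    then show "x0 \<in> S I' e" using nx' by simp
  qed
  then show "(\<Inter>I'\<in>Vset II I (queries_posed A I). S I' e) \<noteq> {}" by blast
qed

end
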